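(* Let $L\ge2$ and let $S=(d,N_1,\dots,N_{L-1},1)$ be a neural network architecture. Let $\Omega\subset\mathbb{R}^d$ be compact and let $\varrho:\mathbb{R}\to\mathbb{R}$ be continuous but not a polynomial, and assume there is $x_0\in\mathbb{R}$ such that $\varrho$ is differentiable at $x_0$ with $\varrho'(x_0)\ne0$. If the closure $\overline{\mathcal{RNN}_\varrho^\Omega(S)}$ in $C(\Omega)$ (supremum norm) is convex, then $\mathcal{RNN}_\varrho^\Omega(S)$ is dense in $C(\Omega)$.
   Context: A neural network with architecture $S=(N_0,\dots,N_L)$ ($N_0=d$) is a family $\Phi=((A_\ell,b_\ell))_{\ell=1}^L$, $A_\ell\in\mathbb{R}^{N_\ell\times N_{\ell-1}}$, $b_\ell\in\mathbb{R}^{N_\ell}$; $\mathcal{NN}(S)$ is the set of these. $\mathrm{R}_\varrho^\Omega(\Phi):\Omega\to\mathbb{R}^{N_L}$, $x\mapsto x_L$, where $x_0=x$, $x_\ell=\varrho(A_\ell x_{\ell-1}+b_\ell)$ for $1\le\ell\le L-1$ (componentwise), $x_L=A_Lx_{L-1}+b_L$; $\mathcal{RNN}_\varrho^\Omega(S)=\{\mathrm{R}_\varrho^\Omega(\Phi):\Phi\in\mathcal{NN}(S)\}$. *)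

theory Defs
  imports "HOL-Analysis.Analysis" "HOL-Computational_Algebra.Polynomial"
begin

definition nn_layer :: "(real \<Rightarrow> real) \<Rightarrow> nat \<Rightarrow> nat \<Rightarrow> (nat \<Rightarrow> nat \<Rightarrow> real) \<Rightarrow> (nat \<Rightarrow> real)
    \<Rightarrow> (nat \<Rightarrow> real) \<Rightarrow> (nat \<Rightarrow> real)" where
  "nn_layer \<rho> Nin Nout A b v = (\<lambda>i. if i < Nout then \<rho> ((\<Sum>j<Nin. A i j * v j) + b i) else 0)"

fun nn_hidden :: "(real \<Rightarrow> real) \<Rightarrow> nat \<Rightarrow> nat list \<Rightarrow> ((nat \<Rightarrow> nat \<Rightarrow> real) \<times> (nat \<Rightarrow> real)) list
    \<Rightarrow> (nat \<Rightarrow> real) \<Rightarrow> (nat \<Rightarrow> real)" where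
  "nn_hidden \<rho> n [] ps v = v"
| "nn_hidden \<rho> n (m # ms) [] v = v"
| "nn_hidden \<rho> n (m # ms) ((A, b) # ps) v = nn_hidden \<rho> m ms ps (nn_layer \<rho> n m A b v)"

text \<open>Realization of a network of architecture (d, N_1, ..., N_{L-1}, 1), where
  Ns = [N_1, ..., N_{L-1}] and d = CARD('d). Parameters: first layer rows A1 i (i < N_1)
  and bias b1; the middle layers ps (one pair per layer 2..L-1); output row c, output bias e.\<close>
definition nn_realize :: "(real \<Rightarrow> real) \<Rightarrow> nat list \<Rightarrow> (nat \<Rightarrow> real^'d) \<Rightarrow> (nat \<Rightarrow> real)
    \<Rightarrow> ((nat \<Rightarrow> nat \<Rightarrow> real) \<times> (nat \<Rightarrow> real)) list \<Rightarrow> (nat \<Rightarrow> real) \<Rightarrow> real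
    \<Rightarrow> real^'d \<Rightarrow> real" where
  "nn_realize \<rho> Ns A1 b1 ps c e x =
     (let v1 = (\<lambda>i. if i < hd Ns then \<rho> (A1 i \<bullet> x + b1 i) else 0);
          h = nn_hidden \<rho> (hd Ns) (tl Ns) ps v1
      in (\<Sum>j<last Ns. c j * h j) + e)"

text \<open>The set RNN of realizations, for the architecture (CARD('d), Ns, 1) (Ns nonempty).
  Functions are compared only on \<Omega> below, so their values outside \<Omega> are irrelevant.\<close>
definition RNN :: "(real \<Rightarrow> real) \<Rightarrow> nat list \<Rightarrow> (real^'d \<Rightarrow> real) set" where
  "RNN \<rho> Ns = {nn_realize \<rho> Ns A1 b1 ps c e | A1 b1 ps c e. length ps = length Ns - 1}"

definition unif_closure_on :: "'a::topological_space set \<Rightarrow> ('a \<Rightarrow> real) set \<Rightarrow> ('a \<Rightarrow> real) set" where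
  "unif_closure_on \<Omega> F = {f. continuous_on \<Omega> f \<and>
       (\<forall>\<epsilon>>0. \<exists>g\<in>F. \<forall>x\<in>\<Omega>. \<bar>f x - g x\<bar> \<le> \<epsilon>)}"

definition convex_fun_set :: "('a \<Rightarrow> real) set \<Rightarrow> bool" where
  "convex_fun_set C = (\<forall>f\<in>C. \<forall>g\<in>C. \<forall>t::real. 0 \<le> t \<and> t \<le> 1 \<longrightarrow>
        (\<lambda>x. t * f x + (1 - t) * g x) \<in> C)"

definition dense_in_C :: "'a::topological_space set \<Rightarrow> ('a \<Rightarrow> real) set \<Rightarrow> bool" where
  "dense_in_C \<Omega> F = (\<forall>f. continuous_on \<Omega> f \<longrightarrow>
       (\<forall>\<epsilon>>0. \<exists>g\<in>F. \<forall>x\<in>\<Omega>. \<bar>f x - g x\<bar> \<le> \<epsilon>))"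

end

theory Submission
  imports Defs
begin


definition s1 :: "(real \<Rightarrow> real) \<Rightarrow> (real \<times> real \<times> real) list \<Rightarrow> real \<Rightarrow> real" where
  "s1 \<rho> L t = (\<Sum>(c,w,b)\<leftarrow>L. c * \<rho> (w*t+b))"

definition V1 :: "(real \<Rightarrow> real) \<Rightarrow> (real \<Rightarrow> real) set" where
  "V1 \<rho> = {f. \<forall>R>0. \<forall>e>0. \<exists>L. \<forall>t. \<bar>t\<bar> \<le> R \<longrightarrow> \<bar>f t - s1 \<rho> L t\<bar> \<le> e}"

lemma abs_tri2: "\<bar>a - b\<bar> \<le> e1 \<Longrightarrow> \<bar>b - c\<bar> \<le> e2 \<Longrightarrow> \<bar>a - c\<bar> \<le> (e1 + e2::real)"
  by (simp add: abs_le_iff)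

lemma V1_D: "f \<in> V1 \<rho> \<Longrightarrow> R > 0 \<Longrightarrow> e > 0 \<Longrightarrow> \<exists>L. \<forall>t. \<bar>t\<bar> \<le> R \<longrightarrow> \<bar>f t - s1 \<rho> L t\<bar> \<le> e"
  unfolding V1_def by blast

lemma s1_append: "s1 \<rho> (L1 @ L2) t = s1 \<rho> L1 t + s1 \<rho> L2 t"
  by (simp add: s1_def)

lemma s1_scale: "s1 \<rho> (map (\<lambda>(c,y). (a*c,y)) L) t = a * s1 \<rho> L t"
  by (induction L) (auto simp: s1_def algebra_simps)

lemma s1_affine: "s1 \<rho> (map (\<lambda>(c,w,b). (c, w*p, w*q+b)) L) t = s1 \<rho> L (p*t+q)"
  by (induction L) (auto simp: s1_def algebra_simps)

lemma s1_single: "s1 \<rho> [(1,1,0)] t = \<rho> t"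
  by (simp add: s1_def)

lemma V1_closed:
  assumes "\<And>R e. R > 0 \<Longrightarrow> e > 0 \<Longrightarrow> \<exists>g\<in>V1 \<rho>. \<forall>t. \<bar>t\<bar> \<le> R \<longrightarrow> \<bar>f t - g t\<bar> \<le> e"
  shows "f \<in> V1 \<rho>"
  unfolding V1_def
proof (intro CollectI allI impI)
  fix R e :: real assume R: "R > 0" and e: "e > 0"
  obtain g where g: "g \<in> V1 \<rho>" "\<forall>t. \<bar>t\<bar> \<le> R \<longrightarrow> \<bar>f t - g t\<bar> \<le> e/2"
    using assms[OF R, of "e/2"] e by auto
  obtain L where L: "\<forall>t. \<bar>t\<bar> \<le> R \<longrightarrow> \<bar>g t - s1 \<rho> L t\<bar> \<le> e/2"
    using V1_D[OF g(1) R, of "e/2"] e by auto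
  show "\<exists>L. \<forall>t. \<bar>t\<bar> \<le> R \<longrightarrow> \<bar>f t - s1 \<rho> L t\<bar> \<le> e"
  proof (intro exI allI impI)
    fix t :: real assume t: "\<bar>t\<bar> \<le> R"
    have "\<bar>f t - g t\<bar> \<le> e/2" "\<bar>g t - s1 \<rho> L t\<bar> \<le> e/2" using g(2) L t by auto
    from abs_tri2[OF this] show "\<bar>f t - s1 \<rho> L t\<bar> \<le> e" by simp
  qed
qed

lemma s1_in_V1: "s1 \<rho> L \<in> V1 \<rho>"
  unfolding V1_def by (auto intro!: exI[of _ L])

lemma rho_in_V1: "\<rho> \<in> V1 \<rho>"
proof -
  have "s1 \<rho> [(1,1,0)] = \<rho>" by (rule ext) (simp add: s1_def)
  then show ?thesis using s1_in_V1[of \<rho> "[(1,1,0)]"] by simp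
qed

lemma V1_add:
  assumes "f \<in> V1 \<rho>" "g \<in> V1 \<rho>"
  shows "(\<lambda>t. f t + g t) \<in> V1 \<rho>"
  unfolding V1_def
proof (intro CollectI allI impI)
  fix R e :: real assume R: "R > 0" and e: "e > 0"
  obtain L1 where L1: "\<forall>t. \<bar>t\<bar> \<le> R \<longrightarrow> \<bar>f t - s1 \<rho> L1 t\<bar> \<le> e/2"
    using V1_D[OF assms(1) R, of "e/2"] e by auto
  obtain L2 where L2: "\<forall>t. \<bar>t\<bar> \<le> R \<longrightarrow> \<bar>g t - s1 \<rho> L2 t\<bar> \<le> e/2"
    using V1_D[OF assms(2) R, of "e/2"] e by auto
  show "\<exists>L. \<forall>t. \<bar>t\<bar> \<le> R \<longrightarrow> \<bar>f t + g t - s1 \<rho> L t\<bar> \<le> e"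
  proof (intro exI[of _ "L1 @ L2"] allI impI)
    fix t :: real assume t: "\<bar>t\<bar> \<le> R"
    have "\<bar>f t - s1 \<rho> L1 t\<bar> \<le> e/2" "\<bar>g t - s1 \<rho> L2 t\<bar> \<le> e/2" using L1 L2 t by auto
    moreover have "\<bar>f t + g t - s1 \<rho> (L1 @ L2) t\<bar> = \<bar>(f t - s1 \<rho> L1 t) + (g t - s1 \<rho> L2 t)\<bar>"
      by (simp add: s1_append algebra_simps)
    moreover have "\<bar>(f t - s1 \<rho> L1 t) + (g t - s1 \<rho> L2 t)\<bar> \<le> \<bar>f t - s1 \<rho> L1 t\<bar> + \<bar>g t - s1 \<rho> L2 t\<bar>"
      by (rule abs_triangle_ineq)
    ultimately show "\<bar>f t + g t - s1 \<rho> (L1 @ L2) t\<bar> \<le> e" by linarith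
  qed
qed

lemma V1_scale:
  assumes "f \<in> V1 \<rho>"
  shows "(\<lambda>t. a * f t) \<in> V1 \<rho>"
  unfolding V1_def
proof (intro CollectI allI impI)
  fix R e :: real assume R: "R > 0" and e: "e > 0"
  have e': "e / (\<bar>a\<bar>+1) > 0" using e by auto
  obtain L where L: "\<forall>t. \<bar>t\<bar> \<le> R \<longrightarrow> \<bar>f t - s1 \<rho> L t\<bar> \<le> e / (\<bar>a\<bar>+1)"
    using V1_D[OF assms R e'] by blast
  show "\<exists>L. \<forall>t. \<bar>t\<bar> \<le> R \<longrightarrow> \<bar>a * f t - s1 \<rho> L t\<bar> \<le> e"
  proof (rule exI[of _ "map (\<lambda>(c,y). (a*c,y)) L"], intro allI impI)
    fix t :: real assume t: "\<bar>t\<bar> \<le> R"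
    have "\<bar>a * f t - s1 \<rho> (map (\<lambda>(c,y). (a*c,y)) L) t\<bar> = \<bar>a\<bar> * \<bar>f t - s1 \<rho> L t\<bar>"
      by (simp add: s1_scale abs_mult[symmetric] right_diff_distrib)
    also have "\<dots> \<le> (\<bar>a\<bar>+1) * (e / (\<bar>a\<bar>+1))"
      using L t by (intro mult_mono) auto
    also have "\<dots> = e" by simp
    finally show "\<bar>a * f t - s1 \<rho> (map (\<lambda>(c,y). (a*c,y)) L) t\<bar> \<le> e" .
  qed
qed

lemma V1_affine:
  assumes "f \<in> V1 \<rho>"
  shows "(\<lambda>t. f (p*t+q)) \<in> V1 \<rho>"
  unfolding V1_def
proof (intro CollectI allI impI)
  fix R e :: real assume R: "R > 0" and e: "e > 0"
  have R': "\<bar>p\<bar>*R + \<bar>q\<bar> + 1 > 0" using R by (simp add: add_nonneg_pos)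
  obtain L where L: "\<forall>t. \<bar>t\<bar> \<le> \<bar>p\<bar>*R + \<bar>q\<bar> + 1 \<longrightarrow> \<bar>f t - s1 \<rho> L t\<bar> \<le> e"
    using V1_D[OF assms R' e] by blast
  show "\<exists>L. \<forall>t. \<bar>t\<bar> \<le> R \<longrightarrow> \<bar>f (p*t+q) - s1 \<rho> L t\<bar> \<le> e"
  proof (rule exI[of _ "map (\<lambda>(c,w,b). (c, w*p, w*q+b)) L"], intro allI impI)
    fix t :: real assume t: "\<bar>t\<bar> \<le> R"
    have "\<bar>p*t+q\<bar> \<le> \<bar>p\<bar>*R + \<bar>q\<bar> + 1"
    proof -
      have "\<bar>p*t\<bar> \<le> \<bar>p\<bar>*R" using t by (simp add: abs_mult mult_left_mono)
      then show ?thesis by linarith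
    qed
    then have "\<bar>f (p*t+q) - s1 \<rho> L (p*t+q)\<bar> \<le> e" using L by blast
    then show "\<bar>f (p*t+q) - s1 \<rho> (map (\<lambda>(c,w,b). (c, w*p, w*q+b)) L) t\<bar> \<le> e"
      by (simp only: s1_affine)
  qed
qed

lemma V1_zero: "(\<lambda>t. 0) \<in> V1 \<rho>"
proof -
  have "s1 \<rho> [] = (\<lambda>t. 0)" by (rule ext) (simp add: s1_def)
  then show ?thesis using s1_in_V1[of \<rho> "[]"] by simp
qed

lemma V1_diff:
  assumes "f \<in> V1 \<rho>" "g \<in> V1 \<rho>"
  shows "(\<lambda>t. f t - g t) \<in> V1 \<rho>"
  using V1_add[OF assms(1) V1_scale[OF assms(2), of "-1"]] by simp

lemma V1_sum:
  fixes n :: nat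
  assumes "\<And>i. i < n \<Longrightarrow> f i \<in> V1 \<rho>"
  shows "(\<lambda>t. \<Sum>i<n. f i t) \<in> V1 \<rho>"
  using assms
proof (induction n)
  case 0 then show ?case using V1_zero by simp
next
  case (Suc n)
  then show ?case using V1_add[of "\<lambda>t. \<Sum>i<n. f i t" \<rho> "f n"] by simp
qed




lemma uc_interval:
  fixes f :: "real \<Rightarrow> real"
  assumes "continuous_on UNIV f" "e > 0"
  shows "\<exists>d>0. \<forall>x y. a \<le> x \<and> x \<le> b \<and> a \<le> y \<and> y \<le> b \<and> \<bar>x - y\<bar> < d \<longrightarrow> \<bar>f x - f y\<bar> < e"
proof -
  have "uniformly_continuous_on {a..b} f"
    by (rule compact_uniformly_continuous) (use assms continuous_on_subset in auto)
  then obtain d where "d > 0" "\<forall>x\<in>{a..b}. \<forall>x'\<in>{a..b}. dist x' x < d \<longrightarrow> dist (f x') (f x) < e"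
    using assms(2) unfolding uniformly_continuous_on_def by metis
  then show ?thesis by (auto simp: dist_real_def)
qed

lemma antider_exists:
  fixes f :: "real \<Rightarrow> real"
  assumes "continuous_on UNIV f"
  shows "\<exists>F. \<forall>x. (F has_real_derivative f x) (at x)"
proof -
  define F where "F x = integral {0..x} f - integral {x..0} f" for x
  have "(F has_real_derivative f x) (at x)" for x
  proof -
    define a where "a = -(\<bar>x\<bar>+1)"
    define b where "b = \<bar>x\<bar>+1"
    have ab: "a < x" "x < b" "a < 0" "0 < b" unfolding a_def b_def by auto
    have cont: "continuous_on {a..b} f" using continuous_on_subset assms by blast
    have int: "f integrable_on {a..b}" by (rule integrable_continuous_real) fact
    have eq: "integral {a..y} f - integral {a..0} f = F y" if "y \<in> {a<..<b}" for y
    proof (cases "0 \<le> y")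
      case True
      have "integral {a..0} f + integral {0..y} f = integral {a..y} f"
        by (rule Henstock_Kurzweil_Integration.integral_combine) (use True that ab in \<open>auto intro: integrable_on_subinterval[OF int]\<close>)
      moreover have "integral {y..0} f = 0" using True by (cases "y = 0") auto
      ultimately show ?thesis by (simp add: F_def)
    next
      case False
      have "integral {a..y} f + integral {y..0} f = integral {a..0} f"
        by (rule Henstock_Kurzweil_Integration.integral_combine) (use False that ab in \<open>auto intro: integrable_on_subinterval[OF int]\<close>)
      moreover have "integral {0..y} f = 0" using False by simp
      ultimately show ?thesis by (simp add: F_def)
    qed
    have "((\<lambda>y. integral {a..y} f) has_real_derivative f x) (at x within {a..b})"
      by (rule integral_has_real_derivative) (use cont ab in auto)
    then have "((\<lambda>y. integral {a..y} f) has_real_derivative f x) (at x)"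
      using at_within_interior[of x "{a..b}"] ab by simp
    then have d0: "((\<lambda>y. integral {a..y} f - integral {a..0} f) has_real_derivative f x - 0) (at x)"
      by (intro DERIV_diff DERIV_const)
    then have d: "((\<lambda>y. integral {a..y} f - integral {a..0} f) has_real_derivative f x) (at x)"
      by simp
    show ?thesis
      by (rule has_field_derivative_transform_within_open[OF d, of "{a<..<b}"]) (use eq ab in auto)
  qed
  then show ?thesis by blast
qed

definition antider :: "(real \<Rightarrow> real) \<Rightarrow> real \<Rightarrow> real" where
  "antider f = (SOME F. \<forall>x. (F has_real_derivative f x) (at x))"

lemma antider_deriv:
  assumes "continuous_on UNIV f"
  shows "(antider f has_real_derivative f x) (at x)"
  using someI_ex[OF antider_exists[OF assms]] unfolding antider_def by blast

definition J :: "real \<Rightarrow> (real \<Rightarrow> real) \<Rightarrow> real \<Rightarrow> real" where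
  "J h f t = (antider f (t+h) - antider f t) / h"

definition Dh :: "real \<Rightarrow> (real \<Rightarrow> real) \<Rightarrow> real \<Rightarrow> real" where
  "Dh h f t = (f (t+h) - f t) / h"

lemma mvt_abs:
  fixes G G' :: "real \<Rightarrow> real"
  assumes "\<And>x. (G has_real_derivative G' x) (at x)"
  shows "\<exists>z. \<bar>z - x\<bar> \<le> \<bar>y - x\<bar> \<and> G y - G x = (y - x) * G' z"
proof (cases x y rule: linorder_cases)
  case less
  then obtain z where "x < z" "z < y" "G y - G x = (y - x) * G' z"
    using MVT2[of x y G G'] assms by blast
  then show ?thesis by (intro exI[of _ z]) auto
next
  case equal then show ?thesis by auto
next
  case greater
  then obtain z where "y < z" "z < x" "G x - G y = (x - y) * G' z"
    using MVT2[of y x G G'] assms by blast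
  then show ?thesis by (intro exI[of _ z]) (auto simp: algebra_simps)
qed

lemma J_mvt2:
  assumes "continuous_on UNIV f" "continuous_on UNIV g" "h > 0"
  shows "\<exists>z. t < z \<and> z < t + h \<and> J h f t - J h g t = f z - g z"
proof -
  have d: "((\<lambda>x. antider f x - antider g x) has_real_derivative f x - g x) (at x)" for x
    using antider_deriv[OF assms(1)] antider_deriv[OF assms(2)] by (intro DERIV_diff) auto
  obtain z where z: "t < z" "z < t + h"
    "(antider f (t+h) - antider g (t+h)) - (antider f t - antider g t) = (t + h - t) * (f z - g z)"
    using MVT2[of t "t+h" "\<lambda>x. antider f x - antider g x" "\<lambda>x. f x - g x"] d assms(3) by auto
  have "J h f t - J h g t = ((antider f (t+h) - antider g (t+h)) - (antider f t - antider g t)) / h"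
    unfolding J_def by (simp add: diff_divide_distrib)
  also have "\<dots> = f z - g z" using z(3) assms(3) by simp
  finally show ?thesis using z by blast
qed

lemma J_mvt:
  assumes "continuous_on UNIV f" "h > 0"
  shows "\<exists>z. t < z \<and> z < t + h \<and> J h f t = f z"
proof -
  obtain z where z: "t < z" "z < t + h" "antider f (t+h) - antider f t = (t + h - t) * f z"
    using MVT2[of t "t+h" "antider f" f] antider_deriv[OF assms(1)] assms(2) by auto
  then have "J h f t = f z" unfolding J_def using assms(2) by simp
  then show ?thesis using z by blast
qed

lemma J_deriv:
  assumes "continuous_on UNIV f" "h \<noteq> 0"
  shows "(J h f has_real_derivative Dh h f x) (at x)"
proof -
  have d1: "((\<lambda>t. antider f (t + h)) has_real_derivative f (x + h)) (at x)"
    using antider_deriv[OF assms(1), of "x+h"] DERIV_shift by blast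
  have "((\<lambda>t. (antider f (t+h) - antider f t) / h) has_real_derivative (f (x+h) - f x) / h) (at x)"
    by (intro DERIV_cdivide DERIV_diff d1 antider_deriv[OF assms(1)])
  then show ?thesis unfolding J_def[abs_def] Dh_def .
qed

lemma J_cont:
  assumes "continuous_on UNIV f" "h \<noteq> 0"
  shows "continuous_on UNIV (J h f)"
proof (intro continuous_at_imp_continuous_on ballI)
  fix x show "isCont (J h f) x" using J_deriv[OF assms, of x] by (rule DERIV_isCont)
qed

lemma Dh_cont:
  assumes "continuous_on UNIV f"
  shows "continuous_on UNIV (Dh h f)"
proof -
  have "Dh h f = (\<lambda>t. (1/h) * (f (t+h) - f t))" by (auto simp: Dh_def[abs_def])
  moreover have "continuous_on UNIV (\<lambda>t. (1/h) * (f (t+h) - f t))"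
    by (intro continuous_intros continuous_on_compose2[OF assms]) auto
  ultimately show ?thesis by simp
qed

lemma Dh_deriv:
  assumes "\<And>x. (f has_real_derivative f' x) (at x)"
  shows "(Dh h f has_real_derivative Dh h f' x) (at x)"
proof -
  have d1: "((\<lambda>t. f (t + h)) has_real_derivative f' (x + h)) (at x)"
    using assms[of "x+h"] DERIV_shift by blast
  have "((\<lambda>t. (f (t+h) - f t) / h) has_real_derivative (f' (x+h) - f' x) / h) (at x)"
    by (intro DERIV_cdivide DERIV_diff d1 assms)
  then show ?thesis unfolding Dh_def[abs_def] .
qed

lemma Dh_pow_deriv:
  assumes "\<And>x. (f has_real_derivative f' x) (at x)"
  shows "((Dh h ^^ m) f has_real_derivative (Dh h ^^ m) f' x) (at x)"
  using assms by (induction m arbitrary: x) (auto intro: Dh_deriv)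

lemma Dh_pow_cont:
  assumes "continuous_on UNIV f"
  shows "continuous_on UNIV ((Dh h ^^ m) f)"
  using assms by (induction m) (auto intro: Dh_cont)

lemma J_pow_cont:
  assumes "continuous_on UNIV f" "h \<noteq> 0"
  shows "continuous_on UNIV ((J h ^^ m) f)"
  using assms by (induction m) (auto intro: J_cont)

lemma family_deriv:
  assumes "continuous_on UNIV f" "h \<noteq> 0" "m < k"
  shows "((Dh h ^^ m) ((J h ^^ (k - m)) f) has_real_derivative
           (Dh h ^^ Suc m) ((J h ^^ (k - Suc m)) f) x) (at x)"
proof -
  have eq: "(J h ^^ (k - m)) f = J h ((J h ^^ (k - Suc m)) f)"
    using assms(3) by (metis Suc_diff_Suc comp_apply funpow.simps(2))
  have "(Dh h ^^ Suc m) ((J h ^^ (k - Suc m)) f) = (Dh h ^^ m) (Dh h ((J h ^^ (k - Suc m)) f))"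
    by (simp add: funpow_Suc_right del: funpow.simps)
  moreover have "((Dh h ^^ m) (J h ((J h ^^ (k - Suc m)) f)) has_real_derivative
      (Dh h ^^ m) (Dh h ((J h ^^ (k - Suc m)) f)) x) (at x)"
    by (rule Dh_pow_deriv) (rule J_deriv[OF J_pow_cont[OF assms(1,2)] assms(2)])
  ultimately show ?thesis using eq by simp
qed

lemma V1_J:
  assumes cont: "continuous_on UNIV f" and fV: "f \<in> V1 \<rho>" and h: "h > 0"
  shows "J h f \<in> V1 \<rho>"
proof (rule V1_closed)
  fix R e :: real assume R: "R > 0" and e: "e > 0"
  obtain d where d: "d > 0" "\<forall>x y. -R-1 \<le> x \<and> x \<le> R+h+1 \<and> -R-1 \<le> y \<and> y \<le> R+h+1 \<and> \<bar>x - y\<bar> < d \<longrightarrow> \<bar>f x - f y\<bar> < e"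
    using uc_interval[OF cont e] by blast
  obtain n :: nat where n: "h / d < n" using reals_Archimedean2 by blast
  have npos: "n > 0" using n h d(2) \<open>d>0\<close> 
    by (metis divide_pos_pos of_nat_0 of_nat_0_less_iff order_less_trans)
  have hn: "h / n < d" using n npos d(1) by (simp add: field_simps)
  define Rn where "Rn t = (\<Sum>j<n. (1/n) * f (1*t + j*h/n))" for t
  have RnV: "Rn \<in> V1 \<rho>"
    unfolding Rn_def[abs_def] by (intro V1_sum V1_scale V1_affine fV)
  show "\<exists>g\<in>V1 \<rho>. \<forall>t. \<bar>t\<bar> \<le> R \<longrightarrow> \<bar>J h f t - g t\<bar> \<le> e"
  proof (intro bexI[OF _ RnV] allI impI)
    fix t :: real assume t: "\<bar>t\<bar> \<le> R"
    define G where "G j = antider f (t + j*h/n)" for j :: nat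
    have trm: "\<bar>(G (Suc j) - G j)/h - (1/n) * f (1*t + j*h/n)\<bar> \<le> e/n" if j: "j < n" for j
    proof -
      have lt: "t + j*h/n < t + Suc j*h/n" using h npos by (simp add: field_simps)
      obtain z where z: "t + j*h/n < z" "z < t + Suc j*h/n" "G (Suc j) - G j = (t + Suc j*h/n - (t + j*h/n)) * f z"
        using MVT2[OF lt, of "antider f" f] antider_deriv[OF cont] unfolding G_def by blast
      have diff: "t + Suc j*h/n - (t + j*h/n) = h/n" by (simp add: distrib_left distrib_right add_divide_distrib)
      have z3: "G (Suc j) - G j = h/n * f z" using z(3) diff by simp
      have "(G (Suc j) - G j)/h - (1/n) * f (1*t + j*h/n) = (1/n) * (f z - f (t + j*h/n))"
        unfolding z3 using h npos by (simp add: field_simps)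
      moreover have "\<bar>f z - f (t + j*h/n)\<bar> < e"
      proof -
        have "j*h/n \<le> h" using j h npos by (simp add: field_simps)
        moreover have "Suc j*h/n \<le> h"
        proof -
          have sj: "real (Suc j) * h \<le> real n * h" using j h by (intro mult_right_mono) auto
          have "real n > 0" using npos by simp
          then show ?thesis using sj by (simp only: pos_divide_le_eq) (simp add: mult.commute)
        qed
        moreover have "0 \<le> j*h/n" using h by simp
        ultimately show ?thesis using d(2) z t hn diff by (intro d(2)[rule_format]) auto
      qed
      ultimately show ?thesis using npos by (simp add: abs_mult field_simps)
    qed
    have tel: "(\<Sum>j<n. G (Suc j) - G j) = G n - G 0" by (rule sum_lessThan_telescope)
    have Gn: "G n = antider f (t+h)" "G 0 = antider f t" unfolding G_def using npos by auto
    have "J h f t = (\<Sum>j<n. G (Suc j) - G j)/h"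
      unfolding J_def tel Gn ..
    also have "\<dots> = (\<Sum>j<n. (G (Suc j) - G j)/h)" by (rule sum_divide_distrib)
    finally have "J h f t = (\<Sum>j<n. (G (Suc j) - G j)/h)" .
    then have "J h f t - Rn t = (\<Sum>j<n. (G (Suc j) - G j)/h - (1/n) * f (1*t + j*h/n))"
      unfolding Rn_def by (simp add: sum_subtractf)
    then have "\<bar>J h f t - Rn t\<bar> \<le> (\<Sum>j<n. \<bar>(G (Suc j) - G j)/h - (1/n) * f (1*t + j*h/n)\<bar>)"
      by (simp add: sum_abs)
    also have "\<dots> \<le> (\<Sum>j<n. e/n)" by (intro sum_mono trm) auto
    also have "\<dots> = e" using npos by simp
    finally show "\<bar>J h f t - Rn t\<bar> \<le> e" .
  qed
qed

lemma V1_J_pow: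
  assumes "continuous_on UNIV f" "f \<in> V1 \<rho>" "h > 0"
  shows "(J h ^^ m) f \<in> V1 \<rho>"
  using assms by (induction m) (auto intro!: V1_J J_pow_cont)




lemma V1_wderiv:
  fixes G G' :: "real \<Rightarrow> real"
  assumes V: "\<forall>w b. (\<lambda>t. t^m * G (w*t+b)) \<in> V1 \<rho>"
    and d: "\<And>x. (G has_real_derivative G' x) (at x)"
    and c: "continuous_on UNIV G'"
  shows "(\<lambda>t. t^(Suc m) * G' (w*t+b)) \<in> V1 \<rho>"
proof (rule V1_closed)
  fix R e :: real assume R: "R > 0" and e: "e > 0"
  define M where "M = \<bar>w\<bar>*R + \<bar>b\<bar> + R + 1"
  define e' where "e' = e / (R^(Suc m) + 1)"
  have Rp: "R^(Suc m) > 0" using R by simp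
  have e': "e' > 0" unfolding e'_def using e Rp by simp
  obtain dl where dl: "dl > 0" "\<forall>x y. -M \<le> x \<and> x \<le> M \<and> -M \<le> y \<and> y \<le> M \<and> \<bar>x - y\<bar> < dl \<longrightarrow> \<bar>G' x - G' y\<bar> < e'"
    using uc_interval[OF c e'] by blast
  define s where "s = min 1 (dl/(2*R))"
  have s: "s > 0" "s \<le> 1" "s*R < dl"
  proof -
    show "s > 0" "s \<le> 1" unfolding s_def using dl R by auto
    have "s*R \<le> (dl/(2*R))*R" unfolding s_def using R by (intro mult_right_mono) auto
    also have "\<dots> = dl/2" using R by simp
    finally show "s*R < dl" using dl by simp
  qed
  define Q where "Q t = (1/s) * (t^m * G ((w+s)*t+b) - t^m * G (w*t+b))" for t
  have QV: "Q \<in> V1 \<rho>" unfolding Q_def[abs_def]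
    by (intro V1_scale V1_diff V[rule_format])
  show "\<exists>g\<in>V1 \<rho>. \<forall>t. \<bar>t\<bar> \<le> R \<longrightarrow> \<bar>t^(Suc m) * G' (w*t+b) - g t\<bar> \<le> e"
  proof (intro bexI[OF _ QV] allI impI)
    fix t :: real assume t: "\<bar>t\<bar> \<le> R"
    obtain z where z: "\<bar>z - (w*t+b)\<bar> \<le> \<bar>((w+s)*t+b) - (w*t+b)\<bar>"
        "G ((w+s)*t+b) - G (w*t+b) = (((w+s)*t+b) - (w*t+b)) * G' z"
      using mvt_abs[OF d] by blast
    have st: "((w+s)*t+b) - (w*t+b) = s*t" by (simp add: algebra_simps)
    have "Q t = (1/s) * (t^m * (G ((w+s)*t+b) - G (w*t+b)))"
      unfolding Q_def by (simp add: right_diff_distrib)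
    also have "\<dots> = (1/s) * (t^m * (s*t*G' z))" using z(2) st by simp
    also have "\<dots> = t^(Suc m) * G' z" using s(1) by (simp add: field_simps)
    finally have Qt: "Q t = t^(Suc m) * G' z" .
    have st2: "\<bar>s*t\<bar> \<le> s*R" using s t by (simp add: abs_mult mult_left_mono)
    have zc: "\<bar>z - (w*t+b)\<bar> < dl" using z(1) st st2 s(3) by linarith
    have wt: "\<bar>w*t\<bar> \<le> \<bar>w\<bar>*R" using t by (simp add: abs_mult mult_left_mono)
    have "s*R \<le> R" using s R by simp
    then have zM: "\<bar>z - (w*t+b)\<bar> \<le> R" using z(1) st st2 by linarith
    have inM: "-M \<le> w*t+b \<and> w*t+b \<le> M" "-M \<le> z \<and> z \<le> M"
      unfolding M_def using wt zM by (auto simp: abs_le_iff)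
    have G'd: "\<bar>G' (w*t+b) - G' z\<bar> \<le> e'"
      using dl(2)[rule_format, of "w*t+b" z] inM zc by (auto simp: abs_minus_commute)
    have tp: "\<bar>t\<bar>^(Suc m) \<le> R^(Suc m)" using t by (intro power_mono) auto
    have "\<bar>t^(Suc m) * G' (w*t+b) - Q t\<bar> = \<bar>t\<bar>^(Suc m) * \<bar>G' (w*t+b) - G' z\<bar>"
      unfolding Qt by (simp add: abs_mult power_abs right_diff_distrib[symmetric])
    also have "\<dots> \<le> R^(Suc m) * e'" using tp G'd Rp by (intro mult_mono) auto
    also have "\<dots> \<le> e" unfolding e'_def using Rp e by (simp add: field_simps)
    finally show "\<bar>t^(Suc m) * G' (w*t+b) - Q t\<bar> \<le> e" .
  qed
qed

lemma J_pow_conv: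
  fixes f :: "real \<Rightarrow> real" and e a b :: real and n :: nat
  assumes c: "continuous_on UNIV f" and e: "e > 0"
  shows "\<exists>dl>0. \<forall>h. 0 < h \<and> h < dl \<longrightarrow> (\<forall>t. a \<le> t \<and> t \<le> b \<longrightarrow> \<bar>(J h ^^ n) f t - f t\<bar> \<le> n*e)"
proof -
  obtain d where d: "d > 0" "\<forall>x y. a-1 \<le> x \<and> x \<le> b+2 \<and> a-1 \<le> y \<and> y \<le> b+2 \<and> \<bar>x - y\<bar> < d \<longrightarrow> \<bar>f x - f y\<bar> < e"
    using uc_interval[OF c e] by blast
  define dl where "dl = min d (1/(n+1))"
  show ?thesis
  proof (intro exI[of _ dl] conjI allI impI)
    show "dl > 0" unfolding dl_def using d by simp
    fix h t :: real assume h: "0 < h \<and> h < dl" and t: "a \<le> t \<and> t \<le> b"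
    have hd: "h < d" using h unfolding dl_def by simp
    have "h < 1/(n+1)" using h unfolding dl_def by simp
    then have "h * (n+1) < 1" by (simp add: field_simps)
    then have hn: "n*h \<le> 1" using h by (simp add: algebra_simps)
    have claim: "\<forall>t. a \<le> t \<and> t + m*h \<le> b+1 \<longrightarrow> \<bar>(J h ^^ m) f t - f t\<bar> \<le> m*e" for m
    proof (induction m)
      case 0 show ?case by simp
    next
      case (Suc m)
      show ?case
      proof (intro allI impI)
        fix t assume tt: "a \<le> t \<and> t + Suc m*h \<le> b+1"
        have cm: "continuous_on UNIV ((J h ^^ m) f)" using J_pow_cont[OF c, of h m] h by auto
        obtain z where z: "t < z" "z < t+h" "J h ((J h^^m) f) t - J h f t = (J h^^m) f z - f z"
          using J_mvt2[OF cm c] h by blast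
        obtain z' where z': "t < z'" "z' < t+h" "J h f t = f z'"
          using J_mvt[OF c] h by blast
        have "z + m*h \<le> b+1" using z tt by (simp add: algebra_simps)
        then have A: "\<bar>(J h^^m) f z - f z\<bar> \<le> m*e" using Suc.IH z tt h by auto
        have mh: "0 \<le> real m * h" using h by simp
        have eqs: "real (Suc m) * h = h + real m * h" by (simp add: algebra_simps)
        have tb: "t \<le> b+1" "z' \<le> b+2" using tt z' h mh eqs hn by linarith+
        have B: "\<bar>f z' - f t\<bar> < e"
          using d(2)[rule_format, of z' t] z' tt hd h tb by auto
        have "(J h ^^ Suc m) f t - f t = ((J h^^m) f z - f z) + (f z' - f t)"
          using z(3) z'(3) by simp
        then have "\<bar>(J h ^^ Suc m) f t - f t\<bar> \<le> \<bar>(J h^^m) f z - f z\<bar> + \<bar>f z' - f t\<bar>"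
          by simp
        also have "\<dots> \<le> Suc m * e" using A B by (simp add: algebra_simps)
        finally show "\<bar>(J h ^^ Suc m) f t - f t\<bar> \<le> Suc m * e" .
      qed
    qed
    show "\<bar>(J h ^^ n) f t - f t\<bar> \<le> n*e" using claim[of n] t hn by auto
  qed
qed

definition lagp :: "nat \<Rightarrow> nat \<Rightarrow> real poly" where
  "lagp n i = (\<Prod>j\<in>{..<n}-{i}. smult (1/(real i - real j)) [:-real j, 1:])"

lemma degree_lagp: assumes "i < n" shows "degree (lagp n i) \<le> n - 1"
proof -
  have "degree (lagp n i) \<le> sum (degree \<circ> (\<lambda>j. smult (1/(real i - real j)) [:-real j, 1:])) ({..<n}-{i})"
    unfolding lagp_def by (rule degree_prod_sum_le) auto
  also have "\<dots> \<le> sum (\<lambda>j. 1) ({..<n}-{i})"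
    by (intro sum_mono) (auto intro: order.trans[OF degree_smult_le])
  also have "\<dots> \<le> n - 1" using \<open>i < n\<close> by (simp add: card_Diff_subset)
  finally show ?thesis .
qed

lemma lag_factor1: "j \<noteq> i \<Longrightarrow> (1/(real i - real j)) * (- real j + real i) = 1"
proof -
  assume "j \<noteq> i"
  then have "real i - real j \<noteq> 0" by simp
  then show ?thesis by (simp add: field_simps)
qed

lemma poly_lagp_node:
  assumes "m < n" "i < n"
  shows "poly (lagp n i) (real m) = (if m = i then 1 else 0)"
proof (cases "m = i")
  case True
  have "poly (lagp n i) (real m) = (\<Prod>j\<in>{..<n}-{i}. 1)"
    unfolding lagp_def poly_prod using True by (intro prod.cong refl) (auto simp: diff_divide_distrib[symmetric])
  then show ?thesis using True by simp
next
  case False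
  have "poly (lagp n i) (real m) = 0"
    unfolding lagp_def poly_prod using False assms by (intro prod_zero) (auto intro!: bexI[of _ m])
  then show ?thesis using False by simp
qed

lemma lagrange:
  fixes f :: "real \<Rightarrow> real"
  assumes f: "\<And>x. f x = (\<Sum>m<n. c m * x^m)" and n: "n \<ge> 1"
  shows "f x = poly (\<Sum>i<n. smult (f (real i)) (lagp n i)) x"
proof -
  define P where "P = (\<Sum>m<n. monom (c m) m)"
  define Q where "Q = (\<Sum>i<n. smult (f (real i)) (lagp n i))"
  have Pf: "poly P y = f y" for y unfolding P_def f by (simp add: poly_sum poly_monom)
  have "P = Q"
  proof (rule poly_eqI_degree[of "real ` {..<n}"])
    fix y assume "y \<in> real ` {..<n}"
    then obtain m where m: "m < n" "y = real m" by auto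
    have "poly Q y = (\<Sum>i<n. f (real i) * poly (lagp n i) (real m))"
      unfolding Q_def m(2) by (simp add: poly_sum)
    also have "\<dots> = (\<Sum>i<n. if i = m then f (real m) else 0)"
      using m(1) by (intro sum.cong) (auto simp: poly_lagp_node)
    also have "\<dots> = f (real m)" using m(1) by simp
    finally show "poly P y = poly Q y" using Pf m(2) by simp
  next
    have card: "card (real ` {..<n}) = n" by (simp add: card_image inj_on_def)
    have "degree P \<le> n - 1" unfolding P_def
      by (intro degree_sum_le) (auto intro: order.trans[OF degree_monom_le])
    then show "degree P < card (real ` {..<n})" using card n by simp
    have dlq: "degree (smult (f (real i)) (lagp n i)) \<le> n - 1" if "i \<in> {..<n}" for i
      using degree_lagp[of i n] that order.trans[OF degree_smult_le] by auto
    have "degree Q \<le> n - 1" unfolding Q_def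
      by (intro degree_sum_le dlq) auto
    then show "degree Q < card (real ` {..<n})" using card n by simp
  qed
  then show ?thesis using Pf[of x] unfolding Q_def by simp
qed




lemma eps_zero:
  fixes a :: real
  assumes "\<And>e. e > 0 \<Longrightarrow> \<bar>a\<bar> \<le> e"
  shows "a = 0"
proof -
  have "\<bar>a\<bar> \<le> 0" by (rule field_le_epsilon) (use assms in simp)
  then show ?thesis by simp
qed

lemma monomials_in_V1:
  assumes c: "continuous_on UNIV \<rho>" and np: "\<not> (\<exists>p :: real poly. \<forall>x. \<rho> x = poly p x)"
    and n: "n \<ge> 1"
  shows "(\<lambda>t. t^n) \<in> V1 \<rho>"
proof (cases "\<exists>h>0. \<exists>b. (Dh h ^^ n) \<rho> b \<noteq> 0")
  case True
  then obtain h b where h: "h > 0" and hb: "(Dh h ^^ n) \<rho> b \<noteq> 0" by blast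
  define G where "G m = (Dh h ^^ m) ((J h ^^ (n - m)) \<rho>)" for m
  have Gd: "(G m has_real_derivative G (Suc m) x) (at x)" if "m < n" for m x
    unfolding G_def using family_deriv[OF c _ that, of h x] h by simp
  have Gc: "continuous_on UNIV (G m)" for m
    unfolding G_def using h by (intro Dh_pow_cont J_pow_cont c) auto
  have ind: "\<forall>w b. (\<lambda>t. t^m * G m (w*t+b)) \<in> V1 \<rho>" if "m \<le> n" for m
    using that
  proof (induction m)
    case 0
    have "(J h ^^ n) \<rho> \<in> V1 \<rho>" by (rule V1_J_pow[OF c rho_in_V1 h])
    then show ?case unfolding G_def by (auto intro: V1_affine)
  next
    case (Suc m)
    then have IH: "\<forall>w b. (\<lambda>t. t^m * G m (w*t+b)) \<in> V1 \<rho>" by simp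
    have "m < n" using Suc.prems by simp
    then show ?case
      using V1_wderiv[OF IH Gd Gc] by blast
  qed
  have "(\<lambda>t. t^n * G n (0*t+b)) \<in> V1 \<rho>" using ind[of n] by blast
  moreover have "G n (0*t+b) = (Dh h ^^ n) \<rho> b" for t unfolding G_def by simp
  ultimately have "(\<lambda>t. t^n * (Dh h ^^ n) \<rho> b) \<in> V1 \<rho>" by simp
  from V1_scale[OF this, of "1 / (Dh h ^^ n) \<rho> b"] show ?thesis using hb by simp
next
  case False
  then have z: "\<And>h b. h > 0 \<Longrightarrow> (Dh h ^^ n) \<rho> b = 0" by blast
  have polyh: "(J h ^^ n) \<rho> x = poly (\<Sum>i<n. smult ((J h ^^ n) \<rho> (real i)) (lagp n i)) x"
    if h: "h > 0" for h x
  proof -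
    define G where "G m = (if m \<le> n then (Dh h ^^ m) ((J h ^^ (n - m)) \<rho>) else (\<lambda>_. 0))" for m
    have Gn: "G n = (\<lambda>_. 0)" unfolding G_def using z[OF h] by auto
    have GSn: "G m = (\<lambda>_. 0)" if "m > n" for m unfolding G_def using that by auto
    have Gd: "\<forall>m x. DERIV (G m) x :> G (Suc m) x"
    proof (intro allI)
      fix m x
      consider "m < n" | "m = n" | "m > n" by arith
      then show "DERIV (G m) x :> G (Suc m) x"
      proof cases
        case 1
        then show ?thesis unfolding G_def using family_deriv[OF c _ 1, of h x] h by simp
      next
        case 2
        then show ?thesis using Gn GSn[of "Suc n"] by simp
      next
        case 3
        then show ?thesis using GSn[of m] GSn[of "Suc m"] by simp
      qed
    qed
    have G0: "G 0 = (J h ^^ n) \<rho>" unfolding G_def by simp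
    have rep: "(J h ^^ n) \<rho> y = (\<Sum>m<n. (G m 0 / fact m) * y^m)" for y
    proof -
      obtain t where "(J h ^^ n) \<rho> y = (\<Sum>m<n. (G m 0 / fact m) * y ^ m) + (G n t / fact n) * y ^ n"
        using Maclaurin_all_le[OF G0 Gd, of y n] by blast
      then show ?thesis using Gn by simp
    qed
    show ?thesis by (rule lagrange[OF rep n])
  qed
  define Q where "Q = (\<Sum>i<n. smult (\<rho> (real i)) (lagp n i))"
  have "\<rho> x = poly Q x" for x
  proof -
    define K where "K = (\<Sum>i<n. \<bar>poly (lagp n i) x\<bar>)"
    have K0: "K \<ge> 0" unfolding K_def by (intro sum_nonneg) auto
    have "\<bar>\<rho> x - poly Q x\<bar> \<le> e" if e: "e > 0" for e
    proof -
      define e' where "e' = e / (real n * (1 + K))"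
      have npos: "real n > 0" using n by simp
      have e'pos: "e' > 0" unfolding e'_def using e npos K0 by simp
      obtain dl where dl: "dl > 0"
        "\<forall>h. 0 < h \<and> h < dl \<longrightarrow> (\<forall>t. -(\<bar>x\<bar>+n) \<le> t \<and> t \<le> \<bar>x\<bar>+n \<longrightarrow> \<bar>(J h ^^ n) \<rho> t - \<rho> t\<bar> \<le> n*e')"
        using J_pow_conv[OF c e'pos] by blast
      define h where "h = dl/2"
      have h: "0 < h" "h < dl" unfolding h_def using dl by auto
      define g where "g = (J h ^^ n) \<rho>"
      have xr: "-(\<bar>x\<bar>+n) \<le> x \<and> x \<le> \<bar>x\<bar>+n" by auto
      have gx: "\<bar>g x - \<rho> x\<bar> \<le> n*e'" unfolding g_def using dl(2)[rule_format, OF _ xr] h by auto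
      have gi: "\<bar>g (real i) - \<rho> (real i)\<bar> \<le> n*e'" if "i < n" for i
      proof -
        have ir: "-(\<bar>x\<bar>+n) \<le> real i \<and> real i \<le> \<bar>x\<bar>+n" using that by auto
        show ?thesis unfolding g_def using dl(2)[rule_format, OF _ ir] h by auto
      qed
      have Qx: "poly Q x = (\<Sum>i<n. \<rho> (real i) * poly (lagp n i) x)" unfolding Q_def by (simp add: poly_sum)
      have gx': "g x = (\<Sum>i<n. g (real i) * poly (lagp n i) x)"
        using polyh[OF h(1), of x] unfolding g_def by (simp add: poly_sum)
      have sd: "(\<Sum>i<n. (g (real i) - \<rho> (real i)) * poly (lagp n i) x)
          = (\<Sum>i<n. g (real i) * poly (lagp n i) x) - (\<Sum>i<n. \<rho> (real i) * poly (lagp n i) x)"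
        by (simp add: left_diff_distrib sum_subtractf)
      have eq: "\<rho> x - poly Q x = (\<rho> x - g x) + (\<Sum>i<n. (g (real i) - \<rho> (real i)) * poly (lagp n i) x)"
        using Qx gx' sd by linarith
      have "\<bar>\<Sum>i<n. (g (real i) - \<rho> (real i)) * poly (lagp n i) x\<bar>
          \<le> (\<Sum>i<n. \<bar>(g (real i) - \<rho> (real i)) * poly (lagp n i) x\<bar>)" by (rule sum_abs)
      also have "\<dots> \<le> (\<Sum>i<n. (n*e') * \<bar>poly (lagp n i) x\<bar>)"
        by (intro sum_mono) (auto simp: abs_mult intro!: mult_right_mono gi)
      also have "\<dots> = n*e'*K" unfolding K_def by (simp add: sum_distrib_left)
      finally have S: "\<bar>\<Sum>i<n. (g (real i) - \<rho> (real i)) * poly (lagp n i) x\<bar> \<le> n*e'*K" .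
      have "\<bar>\<rho> x - poly Q x\<bar> \<le> \<bar>\<rho> x - g x\<bar> + \<bar>\<Sum>i<n. (g (real i) - \<rho> (real i)) * poly (lagp n i) x\<bar>"
        unfolding eq by (rule abs_triangle_ineq)
      also have "\<dots> \<le> n*e' + n*e'*K" using gx S by (simp add: abs_minus_commute)
      also have "\<dots> = real n * e' * (1 + K)" by (simp add: algebra_simps)
      also have "\<dots> = e' * (real n * (1 + K))" by (simp add: algebra_simps)
      also have "\<dots> = e"
      proof -
        have D: "real n * (1 + K) \<noteq> 0" using npos K0 by auto
        then show ?thesis unfolding e'_def by simp
      qed
      finally show ?thesis .
    qed
    then show ?thesis using eps_zero[of "\<rho> x - poly Q x"] by simp
  qed
  then show ?thesis using np by blast
qed

lemma one_in_V1:
  assumes c: "continuous_on UNIV \<rho>" and np: "\<not> (\<exists>p :: real poly. \<forall>x. \<rho> x = poly p x)"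
  shows "(\<lambda>t. 1) \<in> V1 \<rho>"
proof -
  have m1: "(\<lambda>t. t^1) \<in> V1 \<rho>" by (rule monomials_in_V1[OF c np]) simp
  have "(\<lambda>t. (1*t+1)^1 - t^1) \<in> V1 \<rho>"
    by (rule V1_diff[OF V1_affine[OF m1] m1])
  then show ?thesis by simp
qed

lemma pow_in_V1:
  assumes c: "continuous_on UNIV \<rho>" and np: "\<not> (\<exists>p :: real poly. \<forall>x. \<rho> x = poly p x)"
  shows "(\<lambda>t. t^n) \<in> V1 \<rho>"
proof (cases "n = 0")
  case True then show ?thesis using one_in_V1[OF c np] by simp
next
  case False then show ?thesis by (intro monomials_in_V1[OF c np]) simp
qed

lemma exp_in_V1:
  assumes c: "continuous_on UNIV \<rho>" and np: "\<not> (\<exists>p :: real poly. \<forall>x. \<rho> x = poly p x)"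
  shows "exp \<in> V1 \<rho>"
proof (rule V1_closed)
  fix R e :: real assume R: "R > 0" and e: "e > 0"
  have "(\<lambda>n. inverse (fact n) * R^n) \<longlonglongrightarrow> 0"
    by (rule summable_LIMSEQ_zero[OF summable_exp])
  moreover have "e / exp R > 0" using e by simp
  ultimately obtain N where N: "\<forall>n\<ge>N. norm (inverse (fact n) * R^n - 0) < e / exp R"
    using LIMSEQ_D by blast
  then have NB: "inverse (fact N) * R^N < e / exp R" using R by simp
  define g where "g t = (\<Sum>m<N. (1 / fact m) * t^m)" for t :: real
  have gV: "g \<in> V1 \<rho>" unfolding g_def[abs_def]
    by (intro V1_sum V1_scale pow_in_V1[OF c np])
  show "\<exists>g\<in>V1 \<rho>. \<forall>t. \<bar>t\<bar> \<le> R \<longrightarrow> \<bar>exp t - g t\<bar> \<le> e"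
  proof (intro bexI[OF _ gV] allI impI)
    fix t :: real assume t: "\<bar>t\<bar> \<le> R"
    obtain s where s: "\<bar>s\<bar> \<le> \<bar>t\<bar>" "exp t = (\<Sum>m<N. (t ^ m) / fact m) + (exp s / fact N) * t ^ N"
      using Maclaurin_exp_le by blast
    have eq: "exp t - g t = (exp s / fact N) * t ^ N" using s(2) unfolding g_def by simp
    have "\<bar>exp t - g t\<bar> = \<bar>(exp s / fact N) * t ^ N\<bar>" by (simp only: eq)
    also have "\<dots> = exp s * (inverse (fact N) * \<bar>t\<bar>^N)"
      by (simp add: abs_mult power_abs divide_inverse)
    also have "\<dots> \<le> exp R * (inverse (fact N) * R^N)"
    proof (rule mult_mono)
      show "exp s \<le> exp R" using s(1) t by simp
      show "inverse (fact N) * \<bar>t\<bar> ^ N \<le> inverse (fact N) * R ^ N"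
        using t by (intro mult_left_mono power_mono) auto
    qed auto
    also have "\<dots> \<le> exp R * (e / exp R)" using NB by (intro mult_left_mono) auto
    also have "\<dots> = e" by simp
    finally show "\<bar>exp t - g t\<bar> \<le> e" .
  qed
qed





lemma RNN_scale:
  assumes "g \<in> RNN \<rho> Ns"
  shows "(\<lambda>x. a * g x) \<in> RNN \<rho> Ns"
proof -
  obtain A1 b1 ps c e where g: "g = nn_realize \<rho> Ns A1 b1 ps c e" "length ps = length Ns - 1"
    using assms unfolding RNN_def by blast
  have "(\<lambda>x. a * g x) = nn_realize \<rho> Ns A1 b1 ps (\<lambda>j. a * c j) (a * e)"
    unfolding g(1) by (rule ext) (simp add: nn_realize_def Let_def sum_distrib_left distrib_left mult.assoc)
  then show ?thesis using g(2) unfolding RNN_def by blast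
qed

lemma RNN_zero: "(\<lambda>x. 0) \<in> RNN \<rho> Ns"
proof -
  have "nn_realize \<rho> Ns (\<lambda>_. 0) (\<lambda>_. 0) (replicate (length Ns - 1) ((\<lambda>_ _. 0), (\<lambda>_. 0))) (\<lambda>_. 0) 0
      \<in> RNN \<rho> Ns" unfolding RNN_def
    by (rule CollectI, rule exI[of _ "\<lambda>_. 0"], rule exI[of _ "\<lambda>_. 0"],
        rule exI[of _ "replicate (length Ns - 1) ((\<lambda>_ _. 0), (\<lambda>_. 0))"],
        rule exI[of _ "\<lambda>_. 0"], rule exI[of _ 0]) simp
  from RNN_scale[OF this, of 0] show ?thesis by simp
qed

lemma C_closed:
  assumes "continuous_on \<Omega> f"
    and "\<And>e. e > 0 \<Longrightarrow> \<exists>g\<in>unif_closure_on \<Omega> F. \<forall>x\<in>\<Omega>. \<bar>f x - g x\<bar> \<le> e"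
  shows "f \<in> unif_closure_on \<Omega> F"
  unfolding unif_closure_on_def
proof (intro CollectI conjI assms(1) allI impI)
  fix e :: real assume e: "e > 0"
  obtain g where g: "g \<in> unif_closure_on \<Omega> F" "\<forall>x\<in>\<Omega>. \<bar>f x - g x\<bar> \<le> e/2"
    using assms(2)[of "e/2"] e by auto
  have "\<forall>\<epsilon>>0. \<exists>k\<in>F. \<forall>x\<in>\<Omega>. \<bar>g x - k x\<bar> \<le> \<epsilon>" using g(1) unfolding unif_closure_on_def by simp
  then obtain k where k: "k \<in> F" "\<forall>x\<in>\<Omega>. \<bar>g x - k x\<bar> \<le> e/2"
    using e by (meson half_gt_zero)
  show "\<exists>k\<in>F. \<forall>x\<in>\<Omega>. \<bar>f x - k x\<bar> \<le> e"
  proof (intro bexI[of _ k] ballI)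
    fix x assume x: "x \<in> \<Omega>"
    have "\<bar>f x - k x\<bar> \<le> e/2 + e/2" using abs_tri2[of "f x" "g x" "e/2" "k x" "e/2"] g(2) k(2) x by blast
    then show "\<bar>f x - k x\<bar> \<le> e" by simp
  qed (rule k(1))
qed

lemma C_scale:
  assumes "f \<in> unif_closure_on \<Omega> (RNN \<rho> Ns)"
  shows "(\<lambda>x. a * f x) \<in> unif_closure_on \<Omega> (RNN \<rho> Ns)"
  unfolding unif_closure_on_def
proof (intro CollectI conjI allI impI)
  show "continuous_on \<Omega> (\<lambda>x. a * f x)"
    using assms unfolding unif_closure_on_def by (auto intro: continuous_intros)
  fix e :: real assume e: "e > 0"
  have e': "e / (\<bar>a\<bar>+1) > 0" using e by simp
  obtain g where g: "g \<in> RNN \<rho> Ns" "\<forall>x\<in>\<Omega>. \<bar>f x - g x\<bar> \<le> e / (\<bar>a\<bar>+1)"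
    using assms e' unfolding unif_closure_on_def by blast
  show "\<exists>g\<in>RNN \<rho> Ns. \<forall>x\<in>\<Omega>. \<bar>a * f x - g x\<bar> \<le> e"
  proof (intro bexI[OF _ RNN_scale[OF g(1), of a]] ballI)
    fix x assume x: "x \<in> \<Omega>"
    have "\<bar>a * f x - a * g x\<bar> = \<bar>a\<bar> * \<bar>f x - g x\<bar>" by (simp add: abs_mult[symmetric] right_diff_distrib)
    also have "\<dots> \<le> (\<bar>a\<bar>+1) * (e / (\<bar>a\<bar>+1))" using g(2) x by (intro mult_mono) auto
    also have "\<dots> = e" by simp
    finally show "\<bar>a * f x - a * g x\<bar> \<le> e" .
  qed
qed

lemma C_add:
  assumes cv: "convex_fun_set (unif_closure_on \<Omega> (RNN \<rho> Ns))"
    and f: "f \<in> unif_closure_on \<Omega> (RNN \<rho> Ns)" and g: "g \<in> unif_closure_on \<Omega> (RNN \<rho> Ns)"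
  shows "(\<lambda>x. f x + g x) \<in> unif_closure_on \<Omega> (RNN \<rho> Ns)"
proof -
  have "(\<lambda>x. (1/2) * f x + (1 - 1/2) * g x) \<in> unif_closure_on \<Omega> (RNN \<rho> Ns)"
    using cv[unfolded convex_fun_set_def, rule_format, OF f g, of "1/2"] by simp
  from C_scale[OF this, of 2] show ?thesis by (simp add: algebra_simps)
qed

lemma C_zero: "(\<lambda>x. 0) \<in> unif_closure_on \<Omega> (RNN \<rho> Ns)"
proof -
  have "(\<lambda>x. 0) \<in> RNN \<rho> Ns" by (rule RNN_zero)
  then show ?thesis unfolding unif_closure_on_def by (auto intro!: bexI[of _ "\<lambda>x. 0"])
qed


lemma id_approx:
  fixes \<rho> :: "real \<Rightarrow> real"
  assumes der: "(\<rho> has_real_derivative D) (at x0)" and D: "D \<noteq> 0" and M: "M \<ge> 0" and e: "e > 0"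
  shows "\<exists>h. h \<noteq> 0 \<and> (\<forall>u. \<bar>u\<bar> \<le> M \<longrightarrow> \<bar>(\<rho> (h*u + x0) - \<rho> x0)/(h*D) - u\<bar> \<le> e)"
proof -
  have lim: "(\<lambda>y. (\<rho> (x0 + y) - \<rho> x0) / y) \<midarrow>0\<rightarrow> D" using der by (simp add: DERIV_def)
  have r: "e * \<bar>D\<bar> / (M+1) > 0" using e D M by simp
  obtain s where s: "s > 0" "\<forall>y. y \<noteq> 0 \<and> norm (y - 0) < s \<longrightarrow> norm ((\<rho> (x0 + y) - \<rho> x0) / y - D) < e * \<bar>D\<bar> / (M+1)"
    using lim r unfolding LIM_eq by blast
  define h where "h = s / (M+1)"
  have h: "h > 0" unfolding h_def using s M by simp
  show ?thesis
  proof (intro exI[of _ h] conjI allI impI)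
    show "h \<noteq> 0" using h by simp
    fix u assume u: "\<bar>u\<bar> \<le> M"
    show "\<bar>(\<rho> (h*u + x0) - \<rho> x0)/(h*D) - u\<bar> \<le> e"
    proof (cases "u = 0")
      case True then show ?thesis using e by simp
    next
      case False
      define y where "y = h*u"
      have y0: "y \<noteq> 0" unfolding y_def using h False by simp
      have "\<bar>y\<bar> \<le> h * M" unfolding y_def using h u by (simp add: abs_mult mult_left_mono)
      also have "\<dots> < s" unfolding h_def using s M by (simp add: field_simps)
      finally have ys: "\<bar>y\<bar> < s" .
      have q: "\<bar>(\<rho> (x0 + y) - \<rho> x0) / y - D\<bar> < e * \<bar>D\<bar> / (M+1)"
        using s(2) y0 ys by simp
      have "(\<rho> (h*u + x0) - \<rho> x0)/(h*D) - u = (u / D) * ((\<rho> (x0 + y) - \<rho> x0) / y - D)"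
        unfolding y_def using h False D by (simp add: field_simps)
      then have "\<bar>(\<rho> (h*u + x0) - \<rho> x0)/(h*D) - u\<bar> = (\<bar>u\<bar> / \<bar>D\<bar>) * \<bar>(\<rho> (x0 + y) - \<rho> x0) / y - D\<bar>"
        by (simp add: abs_mult)
      also have "\<dots> \<le> (M / \<bar>D\<bar>) * (e * \<bar>D\<bar> / (M+1))"
        using u q D by (intro mult_mono divide_right_mono) auto
      also have "\<dots> = e * (M / (M+1))" using D by (simp add: field_simps)
      also have "\<dots> \<le> e * 1" using e M by (intro mult_left_mono) auto
      finally show ?thesis by simp
    qed
  qed
qed

lemma bounded_rho:
  fixes \<rho> :: "real \<Rightarrow> real"
  assumes "continuous_on UNIV \<rho>"
  shows "\<exists>B. \<forall>y. a \<le> y \<and> y \<le> b \<longrightarrow> \<bar>\<rho> y\<bar> \<le> B"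
proof -
  have "compact (\<rho> ` {a..b})"
    by (rule compact_continuous_image) (use assms continuous_on_subset in auto)
  then obtain B where "\<forall>z\<in>\<rho> ` {a..b}. norm z \<le> B" using compact_imp_bounded bounded_iff by metis
  then show ?thesis by (intro exI[of _ B]) auto
qed

lemma sum_if0: fixes n :: nat shows "1 \<le> n \<Longrightarrow> (\<Sum>j<n. if j = 0 then c else 0) = (c::real)"
proof (induction n)
  case 0 then show ?case by simp
next
  case (Suc n) then show ?case by (cases "n = 0") auto
qed

lemma sum_delta0:
  fixes a :: real and n :: nat and v :: "nat \<Rightarrow> real"
  assumes "n \<ge> 1"
  shows "(\<Sum>j<n. (if j = 0 then a else 0) * v j) = a * v 0"
proof -
  have "(\<Sum>j<n. (if j = 0 then a else 0) * v j) = (\<Sum>j<n. if j = 0 then a * v 0 else 0)"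
    by (rule sum.cong) auto
  also have "\<dots> = a * v 0" using sum_if0[OF assms] .
  finally show ?thesis .
qed

lemma abs_add_le: "\<bar>x\<bar> \<le> a \<Longrightarrow> \<bar>y\<bar> \<le> b \<Longrightarrow> \<bar>x + y\<bar> \<le> a + (b::real)"
  by (rule order.trans[OF abs_triangle_ineq add_mono])




lemma hidden_id:
  fixes \<rho> :: "real \<Rightarrow> real"
  assumes der: "(\<rho> has_real_derivative D) (at x0)" and D: "D \<noteq> 0" and c: "continuous_on UNIV \<rho>"
  shows "\<forall>m\<in>set ms. m \<ge> 1 \<Longrightarrow> \<forall>n M e. n \<ge> 1 \<and> M \<ge> 0 \<and> e > 0 \<longrightarrow>
    (\<exists>ps \<alpha> \<beta>. length ps = length ms \<and>
      (\<forall>v. \<bar>v 0\<bar> \<le> M \<longrightarrow> \<bar>\<alpha> * nn_hidden \<rho> n ms ps v 0 + \<beta> - v 0\<bar> \<le> e))"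
proof (induction ms)
  case Nil
  show ?case by (intro allI impI exI[of _ "[]"] exI[of _ 1] exI[of _ 0]) auto
next
  case (Cons m ms)
  show ?case
  proof (intro allI impI)
  fix n :: nat and M e :: real assume H: "n \<ge> 1 \<and> M \<ge> 0 \<and> e > 0"
  have n1: "n \<ge> 1" and M0: "M \<ge> 0" and e0: "e > 0" using H by auto
  have e2: "e/2 > 0" using e0 by simp
  obtain h where h: "h \<noteq> 0" "\<forall>u. \<bar>u\<bar> \<le> M \<longrightarrow> \<bar>(\<rho> (h*u + x0) - \<rho> x0)/(h*D) - u\<bar> \<le> e/2"
    using id_approx[OF der D M0 e2] by blast
  obtain B where B: "\<forall>y. x0 - \<bar>h\<bar>*M \<le> y \<and> y \<le> x0 + \<bar>h\<bar>*M \<longrightarrow> \<bar>\<rho> y\<bar> \<le> B"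
    using bounded_rho[OF c] by blast
  have B0: "B \<ge> 0" using B[rule_format, of x0] M0 by (auto intro: order.trans[OF abs_ge_zero])
  have hD: "\<bar>h*D\<bar> > 0" using h D by simp
  have e': "e/2 * \<bar>h*D\<bar> > 0" using e2 hD by simp
  have m1: "m \<ge> 1" "\<forall>m\<in>set ms. m \<ge> 1" using Cons.prems by auto
  obtain ps \<alpha> \<beta> where IH: "length ps = length ms"
    "\<forall>v. \<bar>v 0\<bar> \<le> B \<longrightarrow> \<bar>\<alpha> * nn_hidden \<rho> m ms ps v 0 + \<beta> - v 0\<bar> \<le> e/2 * \<bar>h*D\<bar>"
    using Cons.IH[OF m1(2)] m1(1) B0 e' by blast
  define A :: "nat \<Rightarrow> nat \<Rightarrow> real" where "A = (\<lambda>i j. if j = 0 then h else 0)"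
  define b :: "nat \<Rightarrow> real" where "b = (\<lambda>i. x0)"
  show "\<exists>ps \<alpha> \<beta>. length ps = length (m # ms) \<and>
      (\<forall>v. \<bar>v 0\<bar> \<le> M \<longrightarrow> \<bar>\<alpha> * nn_hidden \<rho> n (m # ms) ps v 0 + \<beta> - v 0\<bar> \<le> e)"
  proof (rule exI[of _ "(A, b) # ps"], rule exI[of _ "\<alpha> / (h*D)"], rule exI[of _ "(\<beta> - \<rho> x0) / (h*D)"], intro conjI allI impI)
    show "length ((A, b) # ps) = length (m # ms)" using IH(1) by simp
    fix v :: "nat \<Rightarrow> real" assume v: "\<bar>v 0\<bar> \<le> M"
    define v' where "v' = nn_layer \<rho> n m A b v"
    have v'0: "v' 0 = \<rho> (h * v 0 + x0)"
      unfolding v'_def nn_layer_def A_def b_def using m1(1) sum_delta0[OF n1, of h v] by simp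
    have hv: "\<bar>h * v 0\<bar> \<le> \<bar>h\<bar> * M" using v by (simp add: abs_mult mult_left_mono)
    have "\<bar>v' 0\<bar> \<le> B" unfolding v'0 using B hv by (intro B[rule_format]) (auto simp: abs_le_iff)
    then have I: "\<bar>\<alpha> * nn_hidden \<rho> m ms ps v' 0 + \<beta> - v' 0\<bar> \<le> e/2 * \<bar>h*D\<bar>" using IH(2) by blast
    have hid: "nn_hidden \<rho> n (m # ms) ((A, b) # ps) v = nn_hidden \<rho> m ms ps v'" unfolding v'_def by simp
    let ?w = "nn_hidden \<rho> m ms ps v' 0"
    have split: "\<alpha> / (h*D) * ?w + (\<beta> - \<rho> x0) / (h*D) - v 0
        = (\<alpha> * ?w + \<beta> - v' 0) / (h*D) + ((\<rho> (h * v 0 + x0) - \<rho> x0)/(h*D) - v 0)"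
      using v'0 h(1) D by (simp add: field_simps)
    have P1: "\<bar>(\<alpha> * ?w + \<beta> - v' 0) / (h*D)\<bar> \<le> e/2"
    proof -
      have "\<bar>(\<alpha> * ?w + \<beta> - v' 0) / (h*D)\<bar> = \<bar>\<alpha> * ?w + \<beta> - v' 0\<bar> / \<bar>h*D\<bar>" by (simp add: abs_divide)
      also have "\<dots> \<le> (e/2 * \<bar>h*D\<bar>) / \<bar>h*D\<bar>" using I hD by (intro divide_right_mono) auto
      also have "\<dots> = e/2" using hD by simp
      finally show ?thesis .
    qed
    have P2: "\<bar>(\<rho> (h * v 0 + x0) - \<rho> x0)/(h*D) - v 0\<bar> \<le> e/2" using h(2) v by blast
    show "\<bar>\<alpha> / (h*D) * nn_hidden \<rho> n (m # ms) ((A, b) # ps) v 0 + (\<beta> - \<rho> x0) / (h*D) - v 0\<bar> \<le> e"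
      unfolding hid split using abs_add_le[OF P1 P2] by simp
  qed
  qed
qed




lemma rho_affine_in_C:
  fixes \<rho> :: "real \<Rightarrow> real" and Ns :: "nat list" and \<Omega> :: "(real^'d) set"
  assumes Ns: "length Ns \<ge> 1" "\<forall>N\<in>set Ns. N \<ge> 1" and \<Omega>: "compact \<Omega>" and c: "continuous_on UNIV \<rho>"
    and der: "(\<rho> has_real_derivative D) (at x0)" and D: "D \<noteq> 0"
  shows "(\<lambda>x. \<rho> (a \<bullet> x + b)) \<in> unif_closure_on \<Omega> (RNN \<rho> Ns)"
  unfolding unif_closure_on_def
proof (intro CollectI conjI allI impI)
  have cf: "continuous_on \<Omega> (\<lambda>x. \<rho> (a \<bullet> x + b))"
    by (rule continuous_on_compose2[OF c]) (auto intro!: continuous_on_add continuous_on_inner continuous_on_const continuous_on_id)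
  show "continuous_on \<Omega> (\<lambda>x. \<rho> (a \<bullet> x + b))" by (rule cf)
  fix e :: real assume e: "e > 0"
  have "bounded ((\<lambda>x. \<rho> (a \<bullet> x + b)) ` \<Omega>)"
    by (rule compact_imp_bounded[OF compact_continuous_image[OF cf \<Omega>]])
  then obtain M where M: "\<forall>z\<in>(\<lambda>x. \<rho> (a \<bullet> x + b)) ` \<Omega>. norm z \<le> M" unfolding bounded_iff by blast
  define M' where "M' = max M 0"
  have M': "M' \<ge> 0" "\<forall>x\<in>\<Omega>. \<bar>\<rho> (a \<bullet> x + b)\<bar> \<le> M'" using M unfolding M'_def by auto
  obtain N1 ms where Nsd: "Ns = N1 # ms" using Ns(1) by (cases Ns) auto
  have N1: "N1 \<ge> 1" "\<forall>m\<in>set ms. m \<ge> 1" using Ns(2) Nsd by auto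
  have last1: "last (N1 # ms) \<ge> 1" using Ns(2) Nsd last_in_set[of Ns] by auto
  obtain ps \<alpha> \<beta> where H: "length ps = length ms"
      "\<forall>v. \<bar>v 0\<bar> \<le> M' \<longrightarrow> \<bar>\<alpha> * nn_hidden \<rho> N1 ms ps v 0 + \<beta> - v 0\<bar> \<le> e"
    using hidden_id[OF der D c N1(2)] N1(1) M'(1) e by blast
  define A1 :: "nat \<Rightarrow> real^'d" where "A1 = (\<lambda>i. a)"
  define b1 :: "nat \<Rightarrow> real" where "b1 = (\<lambda>i. b)"
  define cc :: "nat \<Rightarrow> real" where "cc = (\<lambda>j. if j = 0 then \<alpha> else 0)"
  define g where "g = nn_realize \<rho> Ns A1 b1 ps cc \<beta>"
  have gR: "g \<in> RNN \<rho> Ns" unfolding RNN_def g_def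
    by (rule CollectI, rule exI[of _ A1], rule exI[of _ b1], rule exI[of _ ps], rule exI[of _ cc],
        rule exI[of _ \<beta>]) (use H(1) Nsd in simp)
  show "\<exists>g\<in>RNN \<rho> Ns. \<forall>x\<in>\<Omega>. \<bar>\<rho> (a \<bullet> x + b) - g x\<bar> \<le> e"
  proof (intro bexI[OF _ gR] ballI)
    fix x assume x: "x \<in> \<Omega>"
    define v1 where "v1 = (\<lambda>i. if i < N1 then \<rho> (a \<bullet> x + b) else 0)"
    have v10: "v1 0 = \<rho> (a \<bullet> x + b)" using N1 unfolding v1_def by simp
    have gx: "g x = \<alpha> * nn_hidden \<rho> N1 ms ps v1 0 + \<beta>"
      unfolding g_def nn_realize_def Let_def Nsd A1_def b1_def cc_def v1_def
      using sum_delta0[OF last1] by simp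
    have "\<bar>\<alpha> * nn_hidden \<rho> N1 ms ps v1 0 + \<beta> - v1 0\<bar> \<le> e"
      using H(2)[rule_format, of v1] M'(2) x unfolding v10 by blast
    then show "\<bar>\<rho> (a \<bullet> x + b) - g x\<bar> \<le> e" unfolding gx v10[symmetric] by (simp add: abs_minus_commute)
  qed
qed

lemma s1_in_C:
  fixes \<rho> :: "real \<Rightarrow> real" and Ns :: "nat list" and \<Omega> :: "(real^'d) set"
  assumes Ns: "length Ns \<ge> 1" "\<forall>N\<in>set Ns. N \<ge> 1" and \<Omega>: "compact \<Omega>" and c: "continuous_on UNIV \<rho>"
    and der: "(\<rho> has_real_derivative D) (at x0)" and D: "D \<noteq> 0"
    and cv: "convex_fun_set (unif_closure_on \<Omega> (RNN \<rho> Ns))"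
  shows "(\<lambda>x. s1 \<rho> L (a \<bullet> x)) \<in> unif_closure_on \<Omega> (RNN \<rho> Ns)"
proof (induction L)
  case Nil
  have "(\<lambda>x. s1 \<rho> [] (a \<bullet> x)) = (\<lambda>x. 0)" by (simp add: s1_def)
  then show ?case using C_zero by simp
next
  case (Cons p L)
  obtain cw w bb where p: "p = (cw, w, bb)" by (cases p) auto
  have eq: "(\<lambda>x. s1 \<rho> (p # L) (a \<bullet> x)) = (\<lambda>x. cw * \<rho> ((w *\<^sub>R a) \<bullet> x + bb) + s1 \<rho> L (a \<bullet> x))"
    by (rule ext) (simp add: s1_def p)
  show ?case unfolding eq
    by (intro C_add[OF cv] C_scale rho_affine_in_C[OF Ns \<Omega> c der D] Cons.IH)
qed

lemma V1_in_C:
  fixes \<rho> :: "real \<Rightarrow> real" and Ns :: "nat list" and \<Omega> :: "(real^'d) set"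
  assumes Ns: "length Ns \<ge> 1" "\<forall>N\<in>set Ns. N \<ge> 1" and \<Omega>: "compact \<Omega>" and c: "continuous_on UNIV \<rho>"
    and der: "(\<rho> has_real_derivative D) (at x0)" and D: "D \<noteq> 0"
    and cv: "convex_fun_set (unif_closure_on \<Omega> (RNN \<rho> Ns))"
    and fV: "f \<in> V1 \<rho>" and fc: "continuous_on \<Omega> (\<lambda>x. f (a \<bullet> x))"
  shows "(\<lambda>x. f (a \<bullet> x)) \<in> unif_closure_on \<Omega> (RNN \<rho> Ns)"
proof (rule C_closed[OF fc])
  fix e :: real assume e: "e > 0"
  obtain B where B: "\<forall>x\<in>\<Omega>. norm x \<le> B" using compact_imp_bounded[OF \<Omega>] bounded_iff by blast
  define R where "R = norm a * max B 0 + 1"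
  have R: "R > 0" unfolding R_def by (simp add: add_nonneg_pos)
  have aR: "\<bar>a \<bullet> x\<bar> \<le> R" if "x \<in> \<Omega>" for x
  proof -
    have "\<bar>a \<bullet> x\<bar> \<le> norm a * norm x" by (rule Cauchy_Schwarz_ineq2)
    also have "\<dots> \<le> norm a * max B 0" using B that by (intro mult_left_mono) auto
    finally show ?thesis unfolding R_def by simp
  qed
  obtain L where L: "\<forall>t. \<bar>t\<bar> \<le> R \<longrightarrow> \<bar>f t - s1 \<rho> L t\<bar> \<le> e" using V1_D[OF fV R e] by blast
  show "\<exists>g\<in>unif_closure_on \<Omega> (RNN \<rho> Ns). \<forall>x\<in>\<Omega>. \<bar>f (a \<bullet> x) - g x\<bar> \<le> e"
    by (rule bexI[OF _ s1_in_C[OF Ns \<Omega> c der D cv]]) (use L aR in auto)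
qed

definition expsum :: "(real \<times> (real^'d)) list \<Rightarrow> real^'d \<Rightarrow> real" where
  "expsum L x = (\<Sum>(c,a)\<leftarrow>L. c * exp (a \<bullet> x))"

lemma expsum_append: "expsum (L1 @ L2) x = expsum L1 x + expsum L2 x"
  by (simp add: expsum_def)

lemma expsum_cont: "continuous_on S (expsum L)"
proof (induction L)
  case Nil
  show ?case by (simp add: expsum_def)
next
  case (Cons p L)
  obtain cc a where p: "p = (cc, a)" by (cases p) auto
  have "expsum (p # L) = (\<lambda>x. cc * exp (a \<bullet> x) + expsum L x)" by (rule ext) (simp add: expsum_def p)
  then show ?case using Cons.IH by (auto intro!: continuous_intros)
qed

lemma expsum_mult1:
  "expsum (map (\<lambda>(c2,a2). (c1*c2, a1+a2)) L2) x = c1 * exp (a1 \<bullet> x) * expsum L2 x"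
  by (induction L2) (auto simp: expsum_def exp_add inner_add_left algebra_simps)

lemma expsum_mult:
  "expsum (concat (map (\<lambda>(c1,a1). map (\<lambda>(c2,a2). (c1*c2, a1+a2)) L2) L1)) x = expsum L1 x * expsum L2 x"
proof (induction L1)
  case Nil then show ?case by (simp add: expsum_def)
next
  case (Cons p L1)
  obtain c1 a1 where p: "p = (c1, a1)" by (cases p) auto
  have "expsum (p # L1) x = c1 * exp (a1 \<bullet> x) + expsum L1 x" by (simp add: expsum_def p)
  have "expsum (concat (map (\<lambda>(c1,a1). map (\<lambda>(c2,a2). (c1*c2, a1+a2)) L2) (p # L1))) x
      = expsum (map (\<lambda>(c2,a2). (c1*c2, a1+a2)) L2) x
        + expsum (concat (map (\<lambda>(c1,a1). map (\<lambda>(c2,a2). (c1*c2, a1+a2)) L2) L1)) x"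
    by (simp add: p expsum_append)
  also have "\<dots> = c1 * exp (a1 \<bullet> x) * expsum L2 x + expsum L1 x * expsum L2 x"
    unfolding expsum_mult1 Cons.IH ..
  also have "\<dots> = expsum (p # L1) x * expsum L2 x"
    unfolding \<open>expsum (p # L1) x = c1 * exp (a1 \<bullet> x) + expsum L1 x\<close> by (simp add: algebra_simps)
  finally show ?case .
qed

lemma expsum_in_C:
  fixes \<rho> :: "real \<Rightarrow> real" and Ns :: "nat list" and \<Omega> :: "(real^'d) set"
  assumes Ns: "length Ns \<ge> 1" "\<forall>N\<in>set Ns. N \<ge> 1" and \<Omega>: "compact \<Omega>" and c: "continuous_on UNIV \<rho>"
    and np: "\<not> (\<exists>p :: real poly. \<forall>x. \<rho> x = poly p x)"
    and der: "(\<rho> has_real_derivative D) (at x0)" and D: "D \<noteq> 0"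
    and cv: "convex_fun_set (unif_closure_on \<Omega> (RNN \<rho> Ns))"
  shows "expsum L \<in> unif_closure_on \<Omega> (RNN \<rho> Ns)"
proof (induction L)
  case Nil
  have "expsum [] = (\<lambda>x::real^'d. 0)" by (rule ext) (simp add: expsum_def)
  then show ?case using C_zero by simp
next
  case (Cons p L)
  obtain cc a where p: "p = (cc, a)" by (cases p) auto
  have eq: "expsum (p # L) = (\<lambda>x. cc * exp (a \<bullet> x) + expsum L x)" by (rule ext) (simp add: expsum_def p)
  have ec: "continuous_on \<Omega> (\<lambda>x::real^'d. exp (a \<bullet> x))" by (auto intro!: continuous_intros)
  have "(\<lambda>x. exp (a \<bullet> x)) \<in> unif_closure_on \<Omega> (RNN \<rho> Ns)"
    by (rule V1_in_C[OF Ns \<Omega> c der D cv exp_in_V1[OF c np] ec])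
  then show ?case unfolding eq
    by (intro C_add[OF cv] C_scale Cons.IH)
qed


theorem lemmaC9:
  fixes \<rho> :: "real \<Rightarrow> real" and Ns :: "nat list" and \<Omega> :: "(real^'d) set"
    and x0 D :: real
  assumes "length Ns \<ge> 1"
    and "\<forall>N\<in>set Ns. N \<ge> 1"
    and "compact \<Omega>"
    and "continuous_on UNIV \<rho>"
    and "\<not> (\<exists>p :: real poly. \<forall>x. \<rho> x = poly p x)"
    and "(\<rho> has_real_derivative D) (at x0)" and "D \<noteq> 0"
    and "convex_fun_set (unif_closure_on \<Omega> (RNN \<rho> Ns))"
  shows "dense_in_C \<Omega> (RNN \<rho> Ns)"
proof -
  note Ns = assms(1,2) and \<Omega> = assms(3) and c = assms(4) and np = assms(5)
    and der = assms(6) and D = assms(7) and cv = assms(8)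
  have allC: "f \<in> unif_closure_on \<Omega> (RNN \<rho> Ns)" if fc: "continuous_on \<Omega> f" for f
  proof (rule C_closed[OF fc])
    fix e :: real assume e: "e > 0"
    have "\<exists>g. (\<exists>L. g = expsum L) \<and> (\<forall>x\<in>\<Omega>. \<bar>f x - g x\<bar> < e)"
    proof (rule Stone_Weierstrass_HOL[where P = "\<lambda>g. \<exists>L. g = expsum L", OF \<Omega>])
      fix cst :: real
      show "\<exists>L. (\<lambda>x. cst) = expsum L"
        by (rule exI[of _ "[(cst, 0)]"]) (simp add: expsum_def fun_eq_iff)
    next
      fix g :: "real^'d \<Rightarrow> real" assume "\<exists>L. g = expsum L"
      then show "continuous_on \<Omega> g" using expsum_cont by auto
    next
      fix g k :: "real^'d \<Rightarrow> real" assume "(\<exists>L. g = expsum L) \<and> (\<exists>L. k = expsum L)"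
      then obtain L1 L2 where L: "g = expsum L1" "k = expsum L2" by blast
      show "\<exists>L. (\<lambda>x. g x + k x) = expsum L"
        by (rule exI[of _ "L1 @ L2"]) (simp add: L expsum_append fun_eq_iff)
      show "\<exists>L. (\<lambda>x. g x * k x) = expsum L"
        by (rule exI[of _ "concat (map (\<lambda>(c1,a1). map (\<lambda>(c2,a2). (c1*c2, a1+a2)) L2) L1)"])
          (simp add: L expsum_mult fun_eq_iff)
    next
      fix x y :: "real^'d" assume xy: "x \<in> \<Omega> \<and> y \<in> \<Omega> \<and> x \<noteq> y"
      then obtain i where i: "x $ i \<noteq> y $ i" using vec_eq_iff by blast
      have ev: "expsum [(1, axis i 1)] z = exp (z $ i)" for z :: "real^'d"
        by (simp add: expsum_def inner_axis')
      show "\<exists>g. (\<exists>L. g = expsum L) \<and> g x \<noteq> g y"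
        by (rule exI[of _ "expsum [(1, axis i 1)]"]) (use i ev in auto)
    qed (use fc e in auto)
    then obtain L where L: "\<forall>x\<in>\<Omega>. \<bar>f x - expsum L x\<bar> < e" by blast
    show "\<exists>g\<in>unif_closure_on \<Omega> (RNN \<rho> Ns). \<forall>x\<in>\<Omega>. \<bar>f x - g x\<bar> \<le> e"
      by (rule bexI[OF _ expsum_in_C[OF Ns \<Omega> c np der D cv, of L]]) (use L in \<open>auto intro: less_imp_le\<close>)
  qed
  show ?thesis unfolding dense_in_C_def
  proof (intro allI impI)
    fix f :: "real^'d \<Rightarrow> real" and \<epsilon> :: real
    assume f: "continuous_on \<Omega> f" and \<epsilon>: "\<epsilon> > 0"
    from allC[OF f] \<epsilon> show "\<exists>g\<in>RNN \<rho> Ns. \<forall>x\<in>\<Omega>. \<bar>f x - g x\<bar> \<le> \<epsilon>"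
      unfolding unif_closure_on_def by blast
  qed
qed

end
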